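(* The functions $F(n)=\sum_{j=1}^n\frac{(-1)^{j-1}}{j}$, $L(n)=\sum_{j=1}^n\frac{(-1)^{j-1}}{2j-1}$ and $S(n)=\sum_{j=1}^n\frac{1}{j!}$ of the positive integer variable $n$ are transcendental functions in $n$ over $\overline{\mathbb{Q}}$.
   Context: $\overline{\mathbb{Q}}\subseteq\mathbb{C}$ denotes the field of algebraic numbers. A function $f(n)$ of the positive integer variable $n$ is an algebraic function over a subfield $K\subseteq\mathbb{C}$ if there exist polynomials $q_0,\dots,q_k\in K[n]$ with $q_k\neq 0$ such that $q_k(n)f(n)^k+\cdots+q_1(n)f(n)+q_0(n)=0$ for all positive integers $n$; otherwise $f$ is a transcendental function over $K$. *)

theory Defs
  imports "HOL-Computational_Algebra.Polynomial" "HOL-Analysis.Analysis"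
begin

definition alg_numbers :: "complex set" where
  "alg_numbers = {z. algebraic z}"

definition poly_over :: "complex set \<Rightarrow> complex poly \<Rightarrow> bool" where
  "poly_over K p \<longleftrightarrow> (\<forall>i. coeff p i \<in> K)"

definition algebraic_function_over :: "complex set \<Rightarrow> (nat \<Rightarrow> complex) \<Rightarrow> bool" where
  "algebraic_function_over K f \<longleftrightarrow>
     (\<exists>k::nat. \<exists>q::nat \<Rightarrow> complex poly.
        (\<forall>i\<le>k. poly_over K (q i)) \<and> q k \<noteq> 0 \<and>
        (\<forall>n::nat. n \<ge> 1 \<longrightarrow> (\<Sum>i\<le>k. poly (q i) (of_nat n) * f n ^ i) = 0))"

definition transcendental_function_over :: "complex set \<Rightarrow> (nat \<Rightarrow> complex) \<Rightarrow> bool" where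
  "transcendental_function_over K f \<longleftrightarrow> \<not> algebraic_function_over K f"

definition F_fun :: "nat \<Rightarrow> real" where
  "F_fun n = (\<Sum>j=1..n. (-1) ^ (j - 1) / real j)"

definition L_fun :: "nat \<Rightarrow> real" where
  "L_fun n = (\<Sum>j=1..n. (-1) ^ (j - 1) / (2 * real j - 1))"

definition S_fun :: "nat \<Rightarrow> real" where
  "S_fun n = (\<Sum>j=1..n. 1 / fact j)"

end

theory Submission imports Defs "HOL-Computational_Algebra.Primes" begin

lemma LA_aux:
  fixes c :: "'i \<Rightarrow> complex" and x :: "'n \<Rightarrow> 'i \<Rightarrow> rat"
  assumes "finite J" "i0 \<notin> J" "c i0 \<noteq> 0"
    "\<forall>n\<in>N. (\<Sum>l\<in>insert i0 J. c l * of_rat (x n l)) = 0"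
  shows "\<exists>r. r i0 \<noteq> 0 \<and> (\<forall>n\<in>N. (\<Sum>l\<in>insert i0 J. r l * x n l) = 0)"
  using assms
proof (induction J arbitrary: x rule: finite_induct)
  case empty
  then show ?case by (rule_tac x="\<lambda>_. 1" in exI) simp
next
  case (insert j J)
  have ij: "i0 \<noteq> j" "i0 \<notin> J" using insert by auto
  have ins: "insert i0 (insert j J) = insert j (insert i0 J)" by auto
  have jn: "j \<notin> insert i0 J" using insert ij by auto
  have rel: "\<forall>n\<in>N. c j * of_rat (x n j) + (\<Sum>l\<in>insert i0 J. c l * of_rat (x n l)) = 0"
    using insert.prems(3) insert.hyps(1) jn by (simp add: ins)
  show ?case
  proof (cases "\<forall>n\<in>N. x n j = 0")
    case True
    have "\<forall>n\<in>N. (\<Sum>l\<in>insert i0 J. c l * of_rat (x n l)) = 0" using rel True by simp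
    from insert.IH[OF ij(2) insert.prems(2) this] obtain r where
      r: "r i0 \<noteq> 0" "\<forall>n\<in>N. (\<Sum>l\<in>insert i0 J. r l * x n l) = 0" by blast
    show ?thesis
      using r True insert.hyps(1) jn by (rule_tac x=r in exI) (simp add: ins)
  next
    case False
    then obtain n0 where n0: "n0 \<in> N" "x n0 j \<noteq> 0" by blast
    define x' where "x' = (\<lambda>n l. x n l - x n j / x n0 j * x n0 l)"
    have "\<forall>n\<in>N. (\<Sum>l\<in>insert i0 J. c l * of_rat (x' n l)) = 0"
    proof
      fix n assume n: "n \<in> N"
      have "(\<Sum>l\<in>insert i0 J. c l * of_rat (x' n l)) =
         (\<Sum>l\<in>insert i0 J. c l * of_rat (x n l)) - of_rat (x n j / x n0 j) * (\<Sum>l\<in>insert i0 J. c l * of_rat (x n0 l))"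
        unfolding x'_def by (simp add: of_rat_diff of_rat_mult of_rat_divide algebra_simps sum_subtractf sum_distrib_left)
      also have "\<dots> = - c j * of_rat (x n j) + of_rat (x n j / x n0 j) * (c j * of_rat (x n0 j))"
        using rel n n0 by (simp add: eq_neg_iff_add_eq_0[symmetric] add.commute)
      also have "\<dots> = 0" using n0 by (simp add: of_rat_divide field_simps)
      finally show "(\<Sum>l\<in>insert i0 J. c l * of_rat (x' n l)) = 0" .
    qed
    from insert.IH[OF ij(2) insert.prems(2) this] obtain r where
      r: "r i0 \<noteq> 0" "\<forall>n\<in>N. (\<Sum>l\<in>insert i0 J. r l * x' n l) = 0" by blast
    define r' where "r' = r(j := - (\<Sum>l\<in>insert i0 J. r l * x n0 l) / x n0 j)"
    have "\<forall>n\<in>N. (\<Sum>l\<in>insert i0 (insert j J). r' l * x n l) = 0"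
    proof
      fix n assume n: "n \<in> N"
      have e: "(\<Sum>l\<in>insert i0 J. r' l * x n l) = (\<Sum>l\<in>insert i0 J. r l * x n l)"
        using jn unfolding r'_def by (intro sum.cong) auto
      have "(\<Sum>l\<in>insert i0 (insert j J). r' l * x n l) = r' j * x n j + (\<Sum>l\<in>insert i0 J. r l * x n l)"
        using insert.hyps(1) jn by (simp add: ins e)
      also have "\<dots> = (\<Sum>l\<in>insert i0 J. r l * x' n l)"
        unfolding r'_def x'_def using n0
        by (simp add: algebra_simps sum_subtractf sum_distrib_left sum_divide_distrib)
      also have "\<dots> = 0" using r n by blast
      finally show "(\<Sum>l\<in>insert i0 (insert j J). r' l * x n l) = 0" .
    qed
    moreover have "r' i0 \<noteq> 0" using r ij unfolding r'_def by simp
    ultimately show ?thesis by blast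
  qed
qed

lemma LA:
  fixes c :: "'i \<Rightarrow> complex" and x :: "'n \<Rightarrow> 'i \<Rightarrow> rat"
  assumes "finite I" "i0 \<in> I" "c i0 \<noteq> 0"
    "\<forall>n\<in>N. (\<Sum>l\<in>I. c l * of_rat (x n l)) = 0"
  shows "\<exists>r. r i0 \<noteq> 0 \<and> (\<forall>n\<in>N. (\<Sum>l\<in>I. r l * x n l) = 0)"
proof -
  have I: "I = insert i0 (I - {i0})" using assms by auto
  show ?thesis using LA_aux[of "I - {i0}" i0 c N x] assms I by auto
qed

lemma clear_denoms:
  fixes r :: "'i \<Rightarrow> rat"
  assumes "finite I"
  shows "\<exists>M s. M \<noteq> 0 \<and> (\<forall>l\<in>I. of_int (s l) = of_int M * r l)"
  using assms
proof (induction I rule: finite_induct)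
  case empty
  then show ?case by (rule_tac x=1 in exI) auto
next
  case (insert a I)
  then obtain M s where Ms: "M \<noteq> 0" "\<forall>l\<in>I. of_int (s l) = of_int M * r l" by blast
  obtain nu de where q: "quotient_of (r a) = (nu, de)" by (cases "quotient_of (r a)") auto
  have de: "de > 0" using quotient_of_denom_pos[OF q] .
  have ra: "r a = of_int nu / of_int de" using quotient_of_div[OF q] .
  define s' where "s' = (\<lambda>l. if l = a then nu * M else s l * de)"
  have "\<forall>l\<in>insert a I. of_int (s' l) = of_int (M * de) * r l"
  proof
    fix l assume l: "l \<in> insert a I"
    show "of_int (s' l) = of_int (M * de) * r l"
    proof (cases "l = a")
      case True then show ?thesis using de ra by (simp add: s'_def)
    next
      case False then show ?thesis using l Ms unfolding s'_def by (simp add: algebra_simps)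
    qed
  qed
  then show ?case using Ms de by (intro exI[of _ "M*de"] exI[of _ s']) auto
qed

lemma key_dvd:
  fixes c :: "nat \<Rightarrow> int" and y :: rat and p A D :: int
  assumes "prime p" "D \<noteq> 0" "p dvd D" "\<not> p dvd A" "y = of_int A / of_int D"
    "(\<Sum>i\<le>k. of_int (c i) * y ^ i) = 0"
  shows "p dvd c k"
proof -
  have "(\<Sum>i\<le>k. of_int (c i) * y ^ i) * of_int D ^ k = (\<Sum>i\<le>k. of_int (c i * A ^ i * D ^ (k - i)) :: rat)"
    unfolding sum_distrib_right
  proof (intro sum.cong refl)
    fix i assume i: "i \<in> {..k}"
    have "(of_int D :: rat) ^ k = of_int D ^ i * of_int D ^ (k - i)"
      using i by (metis atMost_iff le_add_diff_inverse power_add)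
    have yD: "y * of_int D = of_int A" using assms(2,5) by simp
    have "of_int (c i) * y ^ i * of_int D ^ k = of_int (c i) * (y * of_int D) ^ i * of_int D ^ (k - i)"
      unfolding \<open>(of_int D :: rat) ^ k = _\<close> power_mult_distrib by (simp add: mult_ac)
    then show "of_int (c i) * y ^ i * of_int D ^ k = of_int (c i * A ^ i * D ^ (k - i))"
      by (simp add: yD)
  qed
  then have "(\<Sum>i\<le>k. of_int (c i * A ^ i * D ^ (k - i)) :: rat) = 0" using assms(6) by simp
  then have z: "(\<Sum>i\<le>k. c i * A ^ i * D ^ (k - i)) = 0"
    by (simp only: of_int_sum[symmetric] of_int_eq_0_iff)
  have "(\<Sum>i\<le>k. c i * A ^ i * D ^ (k - i)) = c k * A ^ k + (\<Sum>i<k. c i * A ^ i * D ^ (k - i))"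
  proof -
    have "{..k} = insert k {..<k}" by auto
    then show ?thesis by simp
  qed
  then have e: "c k * A ^ k = - (\<Sum>i<k. c i * A ^ i * D ^ (k - i))" using z by simp
  have "p dvd (\<Sum>i<k. c i * A ^ i * D ^ (k - i))"
  proof (intro dvd_sum)
    fix i assume "i \<in> {..<k}"
    then have "D dvd D ^ (k - i)" by (intro dvd_power) auto
    then show "p dvd c i * A ^ i * D ^ (k - i)" using dvd_trans[OF assms(3) dvd_trans[OF _ dvd_triv_right]] by blast
  qed
  then have "p dvd c k * A ^ k" using e by simp
  then show ?thesis using assms(4) prime_dvd_power[OF assms(1), of A k] by (auto simp: prime_dvd_mult_iff[OF assms(1)])
qed

lemma split_den:
  fixes p :: int and e d :: "'j \<Rightarrow> int"
  assumes "prime p" "finite J" "\<forall>j\<in>J. \<not> p dvd d j"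
  shows "D \<noteq> 0 \<Longrightarrow> p dvd D \<Longrightarrow> \<not> p dvd A \<Longrightarrow> \<exists>A' D'. D' \<noteq> 0 \<and> p dvd D' \<and> \<not> p dvd A' \<and>
     of_int A / of_int D + (\<Sum>j\<in>J. of_int (e j) / of_int (d j)) = (of_int A' / of_int D' :: rat)"
  using assms(2,3)
proof (induction J arbitrary: A D rule: finite_induct)
  case empty
  then show ?case by auto
next
  case (insert j J)
  have dj: "d j \<noteq> 0" "\<not> p dvd d j" using insert.prems by auto
  have "\<not> p dvd A * d j" using insert.prems(3) dj(2) assms(1) by (simp add: prime_dvd_mult_iff)
  moreover have "p dvd e j * D" using insert.prems(2) by simp
  ultimately have n: "\<not> p dvd (A * d j + e j * D)" using dvd_add_left_iff by blast
  have "of_int A / of_int D + of_int (e j) / of_int (d j) = (of_int (A * d j + e j * D) / of_int (D * d j) :: rat)"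
    using dj insert.prems(1) by (simp add: field_simps)
  moreover have "D * d j \<noteq> 0" "p dvd D * d j" using dj insert.prems by auto
  ultimately obtain A' D' where "D' \<noteq> 0 \<and> p dvd D' \<and> \<not> p dvd A' \<and>
     of_int (A * d j + e j * D) / of_int (D * d j) + (\<Sum>j\<in>J. of_int (e j) / of_int (d j)) = (of_int A' / of_int D' :: rat)"
    using insert.IH[of "D * d j" "A * d j + e j * D"] insert.prems n by auto
  moreover have "of_int A / of_int D + (\<Sum>j\<in>insert j J. of_int (e j) / of_int (d j)) =
     of_int A / of_int D + of_int (e j) / of_int (d j) + (\<Sum>j\<in>J. of_int (e j) / of_int (d j) :: rat)"
    using insert.hyps by (simp add: add.assoc)
  ultimately have "D' \<noteq> 0 \<and> p dvd D' \<and> \<not> p dvd A' \<and> of_int A / of_int D + (\<Sum>j\<in>insert j J. of_int (e j) / of_int (d j)) =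
     (of_int A' / of_int D' :: rat)" 
    using \<open>of_int A / of_int D + of_int (e j) / of_int (d j) = _\<close> by simp
  then show ?case by blast
qed

lemma main_crit:
  fixes g :: "nat \<Rightarrow> rat"
  assumes H: "\<And>t. t \<ge> 1 \<Longrightarrow> \<exists>B. \<forall>p. prime p \<and> p > B \<longrightarrow>
     (\<exists>A D. D \<noteq> 0 \<and> int p dvd D \<and> \<not> int p dvd A \<and> g (p + t) = of_int A / of_int D)"
  shows "transcendental_function_over K (\<lambda>n. of_rat (g n))"
  unfolding transcendental_function_over_def algebraic_function_over_def
proof
  assume "\<exists>k q. (\<forall>i\<le>k. poly_over K (q i)) \<and> q k \<noteq> 0 \<and>
        (\<forall>n::nat. n \<ge> 1 \<longrightarrow> (\<Sum>i\<le>k. poly (q i) (of_nat n) * (of_rat (g n)) ^ i) = 0)"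
  then obtain k and q :: "nat \<Rightarrow> complex poly" where qk: "q k \<noteq> 0" and
    qrel: "\<And>n. n \<ge> 1 \<Longrightarrow> (\<Sum>i\<le>k. poly (q i) (of_nat n) * (of_rat (g n)) ^ i) = 0" by blast
  define Dg where "Dg = (\<Sum>i\<le>k. degree (q i))"
  have deg: "degree (q i) \<le> Dg" if "i \<le> k" for i
    unfolding Dg_def using that by (intro member_le_sum) auto
  have polyD: "poly (q i) z = (\<Sum>d\<le>Dg. coeff (q i) d * z ^ d)" if "i \<le> k" for i z
  proof -
    have "poly (q i) z = (\<Sum>d\<le>degree (q i). coeff (q i) d * z ^ d)" by (rule poly_altdef)
    also have "\<dots> = (\<Sum>d\<le>Dg. coeff (q i) d * z ^ d)"
      using deg[OF that] by (intro sum.mono_neutral_left) (auto simp: coeff_eq_0)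
    finally show ?thesis .
  qed
  define I where "I = {..k} \<times> {..Dg}"
  define i0 where "i0 = (k, degree (q k))"
  define c where "c = (\<lambda>(i,d). coeff (q i) d)"
  define x where "x = (\<lambda>n (i,d). of_nat n ^ d * g n ^ i :: rat)"
  have rel: "\<forall>n\<in>{n. n \<ge> 1}. (\<Sum>l\<in>I. c l * of_rat (x n l)) = 0"
  proof
    fix n assume n: "n \<in> {n. n \<ge> (1::nat)}"
    have "(\<Sum>l\<in>I. c l * of_rat (x n l)) = (\<Sum>i\<le>k. \<Sum>d\<le>Dg. coeff (q i) d * of_nat n ^ d * of_rat (g n) ^ i)"
      unfolding I_def sum.cartesian_product c_def x_def by (intro sum.cong refl) (auto simp: of_rat_mult of_rat_power mult_ac)
    also have "\<dots> = (\<Sum>i\<le>k. poly (q i) (of_nat n) * of_rat (g n) ^ i)"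
      by (intro sum.cong refl) (simp add: polyD sum_distrib_right)
    also have "\<dots> = 0" using qrel n by simp
    finally show "(\<Sum>l\<in>I. c l * of_rat (x n l)) = 0" .
  qed
  have fin: "finite I" unfolding I_def by simp
  have i0I: "i0 \<in> I" unfolding I_def i0_def using deg[of k] by simp
  have ci0: "c i0 \<noteq> 0" unfolding c_def i0_def using qk by simp
  obtain r where r: "r i0 \<noteq> 0" "\<forall>n\<in>{n. n \<ge> 1}. (\<Sum>l\<in>I. r l * x n l) = 0"
    using LA[OF fin i0I ci0 rel] by blast
  obtain M s where Ms: "M \<noteq> 0" "\<forall>l\<in>I. of_int (s l) = of_int M * r l"
    using clear_denoms[OF fin, of r] by blast
  define Q where "Q = (\<lambda>i (z::int). \<Sum>d\<le>Dg. s (i,d) * z ^ d)"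
  have relQ: "(\<Sum>i\<le>k. of_int (Q i (int n)) * g n ^ i) = 0" if n: "n \<ge> 1" for n
  proof -
    have e1: "(\<Sum>l\<in>I. of_int (s l) * x n l) = (\<Sum>i\<le>k. \<Sum>d\<le>Dg. of_int (s (i,d)) * (of_nat n ^ d * g n ^ i))"
      unfolding I_def sum.cartesian_product x_def by (intro sum.cong refl) auto
    have "(\<Sum>i\<le>k. of_int (Q i (int n)) * g n ^ i) = (\<Sum>i\<le>k. \<Sum>d\<le>Dg. of_int (s (i,d)) * (of_nat n ^ d * g n ^ i))"
      unfolding Q_def by (intro sum.cong refl) (simp add: sum_distrib_left sum_distrib_right mult_ac)
    then have "(\<Sum>i\<le>k. of_int (Q i (int n)) * g n ^ i) = (\<Sum>l\<in>I. of_int (s l) * x n l)"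
      using e1 by simp
    also have "\<dots> = (\<Sum>l\<in>I. of_int M * (r l * x n l))"
      using Ms by (intro sum.cong refl) simp
    also have "\<dots> = 0" using r n by (simp add: sum_distrib_left[symmetric])
    finally show ?thesis .
  qed
  have s0: "s i0 \<noteq> 0" using Ms r i0I by auto
  define P where "P = (\<Sum>d\<le>Dg. monom (s (k,d)) d)"
  have polyP: "poly P z = Q k z" for z unfolding P_def Q_def by (simp add: poly_sum poly_monom)
  have "coeff P (degree (q k)) = s i0" unfolding P_def i0_def using deg[of k] by (simp add: coeff_sum_monom)
  then have P0: "P \<noteq> 0" using s0 by auto
  define R where "R = {z. poly P z = 0}"
  have finR: "finite R" unfolding R_def using poly_roots_finite[OF P0] .
  define t where "t = nat (Max (insert 0 R)) + 1"
  have t1: "t \<ge> 1" unfolding t_def by simp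
  have Qt: "Q k (int t) \<noteq> 0"
  proof
    assume "Q k (int t) = 0"
    then have "int t \<in> R" unfolding R_def polyP by simp
    then have "int t \<le> Max (insert 0 R)" using finR by simp
    moreover have "Max (insert 0 R) \<ge> 0" using finR by simp
    ultimately show False unfolding t_def by linarith
  qed
  obtain B where B: "\<forall>p. prime p \<and> p > B \<longrightarrow>
     (\<exists>A D. D \<noteq> 0 \<and> int p dvd D \<and> \<not> int p dvd A \<and> g (p + t) = of_int A / of_int D)"
    using H[OF t1] by blast
  obtain p where p: "prime p" "max B (max t (nat \<bar>Q k (int t)\<bar>)) < p" using bigger_prime by blast
  then obtain A D where AD: "D \<noteq> 0" "int p dvd D" "\<not> int p dvd A" "g (p + t) = of_int A / of_int D"
    using B by auto
  have pi: "prime (int p)" using p by (simp add: prime_nat_int_transfer)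
  have "int p dvd Q k (int (p + t))"
    using key_dvd[OF pi AD(1,2,3,4) relQ[of "p+t"]] t1 by simp
  moreover have "Q k (int (p + t)) mod int p = Q k (int t) mod int p"
  proof -
    have m: "(s (k,d) * (int p + int t) ^ d) mod int p = (s (k,d) * int t ^ d) mod int p" for d
    proof -
      have "(int p + int t) ^ d mod int p = int t ^ d mod int p"
        by (metis mod_add_self1 power_mod)
      then show ?thesis by (metis mod_mult_right_eq)
    qed
    have "Q k (int (p + t)) mod int p = (\<Sum>d\<le>Dg. (s (k,d) * (int p + int t) ^ d) mod int p) mod int p"
      unfolding Q_def by (simp only: mod_sum_eq of_nat_add)
    also have "\<dots> = (\<Sum>d\<le>Dg. (s (k,d) * int t ^ d) mod int p) mod int p" by (simp only: m)
    also have "\<dots> = Q k (int t) mod int p" unfolding Q_def by (simp only: mod_sum_eq)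
    finally show ?thesis .
  qed
  ultimately have "int p dvd Q k (int t)" by (simp add: dvd_eq_mod_eq_0)
  then have "\<bar>int p\<bar> \<le> \<bar>Q k (int t)\<bar>" using dvd_imp_le_int[OF Qt] by blast
  then show False using p(2) by linarith
qed

lemma not_dvd_neg1_pow: "prime (p::int) \<Longrightarrow> \<not> p dvd (-1)^n"
  by (metis dvd_minus_iff minus_one_power_iff not_prime_unit one_dvd)

lemma dvd_small: "(p::nat) dvd j \<Longrightarrow> 0 < j \<Longrightarrow> j < 2 * p \<Longrightarrow> j = p"
proof -
  assume "p dvd j" "0 < j" "j < 2 * p"
  then obtain m where m: "j = p * m" by (auto elim: dvdE)
  then have "m \<noteq> 0" "m < 2" using \<open>0 < j\<close> \<open>j < 2*p\<close> by auto
  then have "m = 1" by linarith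
  then show ?thesis using m by simp
qed

definition Fq :: "nat \<Rightarrow> rat" where
  "Fq n = (\<Sum>j=1..n. (-1) ^ (j - 1) / of_nat j)"

lemma F_eq: "complex_of_real (F_fun n) = of_rat (Fq n)"
  unfolding F_fun_def Fq_def by (simp add: of_rat_sum of_rat_divide of_rat_power)

lemma F_trans: "transcendental_function_over K (\<lambda>n. complex_of_real (F_fun n))"
proof -
  have "transcendental_function_over K (\<lambda>n. of_rat (Fq n))"
  proof (rule main_crit)
    fix t :: nat assume "t \<ge> 1"
    show "\<exists>B. \<forall>p. prime p \<and> p > B \<longrightarrow>
     (\<exists>A D. D \<noteq> 0 \<and> int p dvd D \<and> \<not> int p dvd A \<and> Fq (p + t) = of_int A / of_int D)"
    proof (intro exI[of _ t] allI impI)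
      fix p :: nat assume p: "prime p \<and> t < p"
      have pi: "prime (int p)" using p by (simp add: prime_nat_int_transfer)
      define J where "J = {1..p+t} - {p}"
      have ndvd: "\<forall>j\<in>J. \<not> int p dvd int j"
      proof
        fix j assume j: "j \<in> J"
        show "\<not> int p dvd int j"
        proof
          assume "int p dvd int j"
          then have "p dvd j" by simp
          moreover have "0 < j" "j < 2 * p" using j p unfolding J_def by auto
          ultimately have "j = p" by (rule dvd_small)
          then show False using j unfolding J_def by simp
        qed
      qed
      have pin: "p \<in> {1..p+t}" using p prime_gt_0_nat by auto
      then have "Fq (p + t) = (-1) ^ (p - 1) / of_nat p + (\<Sum>j\<in>J. (-1) ^ (j - 1) / of_nat j)"
        unfolding Fq_def J_def using sum.remove[OF finite_atLeastAtMost pin, of "\<lambda>j. (-1)^(j-1)/of_nat j :: rat"] by simp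
      also have "\<dots> = of_int ((-1) ^ (p - 1)) / of_int (int p) + (\<Sum>j\<in>J. of_int ((-1) ^ (j - 1)) / of_int (int j))"
        by simp
      finally have eq: "Fq (p + t) = of_int ((-1) ^ (p - 1)) / of_int (int p) + (\<Sum>j\<in>J. of_int ((-1) ^ (j - 1)) / of_int (int j))" .
      have "int p \<noteq> 0" using p prime_gt_0_nat by auto
      from split_den[OF pi _ ndvd this, of "(-1)^(p-1)" "\<lambda>j. (-1)^(j-1)"] 
      show "\<exists>A D. D \<noteq> 0 \<and> int p dvd D \<and> \<not> int p dvd A \<and> Fq (p + t) = of_int A / of_int D"
        using not_dvd_neg1_pow[OF pi] unfolding eq J_def by auto
    qed
  qed
  then show ?thesis by (simp add: F_eq)
qed

definition Lq :: "nat \<Rightarrow> rat" where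
  "Lq n = (\<Sum>j=1..n. (-1) ^ (j - 1) / (2 * of_nat j - 1))"

lemma L_eq: "complex_of_real (L_fun n) = of_rat (Lq n)"
  unfolding L_fun_def Lq_def by (simp add: of_rat_sum of_rat_divide of_rat_power of_rat_diff of_rat_mult)

lemma L_term: "j \<ge> 1 \<Longrightarrow> ((-1) ^ (j - 1) / (2 * of_nat j - 1) :: rat) = of_int ((-1) ^ (j - 1)) / of_int (int (2 * j - 1))"
  by (simp add: of_nat_diff)

lemma L_trans: "transcendental_function_over K (\<lambda>n. complex_of_real (L_fun n))"
proof -
  have "transcendental_function_over K (\<lambda>n. of_rat (Lq n))"
  proof (rule main_crit)
    fix t :: nat assume "t \<ge> 1"
    show "\<exists>B. \<forall>p. prime p \<and> p > B \<longrightarrow>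
     (\<exists>A D. D \<noteq> 0 \<and> int p dvd D \<and> \<not> int p dvd A \<and> Lq (p + t) = of_int A / of_int D)"
    proof (intro exI[of _ "2*t+2"] allI impI)
      fix p :: nat assume p: "prime p \<and> 2*t+2 < p"
      have pi: "prime (int p)" using p by (simp add: prime_nat_int_transfer)
      have podd: "odd p" using p prime_odd_nat by auto
      define j0 where "j0 = (p + 1) div 2"
      have j0p: "2 * j0 - 1 = p" unfolding j0_def using podd by (auto elim: oddE)
      define J where "J = {1..p+t} - {j0}"
      have ndvd: "\<forall>j\<in>J. \<not> int p dvd int (2 * j - 1)"
      proof
        fix j assume j: "j \<in> J"
        show "\<not> int p dvd int (2 * j - 1)"
        proof
          assume "int p dvd int (2 * j - 1)"
          then have "p dvd 2 * j - 1" by simp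
          then obtain m where m: "2 * j - 1 = p * m" by (auto elim: dvdE)
          have j1: "1 \<le> j" "j \<le> p + t" "j \<noteq> j0" using j unfolding J_def by auto
          have "p * m < p * 3" using m j1 p by linarith
          then have "m < 3" by simp
          moreover have "m \<noteq> 0"
          proof
            assume "m = 0"
            with m have "2 * j - 1 = 0" by simp
            with j1 show False by linarith
          qed
          moreover have "m \<noteq> 2"
          proof
            assume "m = 2"
            with m have "2 * j - 1 = 2 * p" by simp
            with j1 show False by presburger
          qed
          ultimately have "m = 1" by linarith
          then have "2 * j - 1 = p" using m by simp
          then show False using j1 j0p by linarith
        qed
      qed
      have pin: "j0 \<in> {1..p+t}" using j0p p unfolding j0_def by auto
      have "Lq (p + t) = (-1) ^ (j0 - 1) / (2 * of_nat j0 - 1) + (\<Sum>j\<in>J. (-1) ^ (j - 1) / (2 * of_nat j - 1))"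
        unfolding Lq_def J_def using sum.remove[OF finite_atLeastAtMost pin, of "\<lambda>j. (-1)^(j-1)/(2 * of_nat j - 1) :: rat"] by simp
      also have "\<dots> = of_int ((-1) ^ (j0 - 1)) / of_int (int p) + (\<Sum>j\<in>J. of_int ((-1) ^ (j - 1)) / of_int (int (2 * j - 1)))"
        using L_term[of j0] pin j0p by (intro arg_cong2[where f="(+)"] sum.cong refl) (auto simp: J_def L_term)
      finally have eq: "Lq (p + t) = of_int ((-1) ^ (j0 - 1)) / of_int (int p) + (\<Sum>j\<in>J. of_int ((-1) ^ (j - 1)) / of_int (int (2 * j - 1)))" .
      have "int p \<noteq> 0" using p prime_gt_0_nat by auto
      from split_den[OF pi _ ndvd this, of "(-1)^(j0-1)" "\<lambda>j. (-1)^(j-1)"] 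
      show "\<exists>A D. D \<noteq> 0 \<and> int p dvd D \<and> \<not> int p dvd A \<and> Lq (p + t) = of_int A / of_int D"
        using not_dvd_neg1_pow[OF pi] unfolding eq J_def by auto
    qed
  qed
  then show ?thesis by (simp add: L_eq)
qed

definition Sq :: "nat \<Rightarrow> rat" where
  "Sq n = (\<Sum>j=1..n. 1 / fact j)"

lemma a0: "(of_nat (fact j) :: 'a::semiring_char_0) = fact j" by (rule of_nat_fact)
lemma a1: "complex_of_real (1 / fact j) = of_rat (1 / fact j)"
proof -
  have r: "(fact j :: real) = of_nat (fact j)" by (rule a0[symmetric])
  have q: "(fact j :: rat) = of_nat (fact j)" by (rule a0[symmetric])
  have "complex_of_real (1 / fact j) = 1 / of_nat (fact j)" unfolding r by (simp only: of_real_divide of_real_1 of_real_of_nat_eq)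
  also have "\<dots> = of_rat (1 / fact j)" unfolding q by (simp only: of_rat_divide of_rat_1 of_rat_of_nat_eq)
  finally show ?thesis .
qed
lemma a2: "(1 / fact j :: rat) = of_int 1 / of_int (int (fact j))"
proof -
  have q: "(fact j :: rat) = of_nat (fact j)" by (rule a0[symmetric])
  show ?thesis unfolding q by (simp only: of_int_1 of_int_of_nat_eq)
qed

lemma S_eq: "complex_of_real (S_fun n) = of_rat (Sq n)"
  unfolding S_fun_def Sq_def of_real_sum of_rat_sum by (intro sum.cong refl a1)

lemma prod_shift_mod: "(\<Prod>m\<in>{Suc i..t}. m + p) mod p = (\<Prod>m\<in>{Suc i..t}. m) mod (p::nat)"
proof -
  have "(\<Prod>m\<in>{Suc i..t}. m + p) mod p = (\<Prod>m\<in>{Suc i..t}. (m + p) mod p) mod p"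
    by (simp only: mod_prod_eq)
  also have "\<dots> = (\<Prod>m\<in>{Suc i..t}. m mod p) mod p" by simp
  also have "\<dots> = (\<Prod>m\<in>{Suc i..t}. m) mod p" by (simp only: mod_prod_eq)
  finally show ?thesis .
qed

lemma S_trans: "transcendental_function_over K (\<lambda>n. complex_of_real (S_fun n))"
proof -
  have "transcendental_function_over K (\<lambda>n. of_rat (Sq n))"
  proof (rule main_crit)
    fix t :: nat assume "t \<ge> 1"
    define a where "a = (\<Sum>i\<le>t. \<Prod>m\<in>{Suc i..t}. m)"
    show "\<exists>B. \<forall>p. prime p \<and> p > B \<longrightarrow>
     (\<exists>A D. D \<noteq> 0 \<and> int p dvd D \<and> \<not> int p dvd A \<and> Sq (p + t) = of_int A / of_int D)"
    proof (intro exI[of _ "a + t"] allI impI)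
      fix p :: nat assume p: "prime p \<and> a + t < p"
      have pi: "prime (int p)" using p by (simp add: prime_nat_int_transfer)
      have p0: "p > 0" using p prime_gt_0_nat by auto
      define e0 where "e0 = (\<Sum>i\<le>t. \<Prod>{Suc (p + i)..p + t})"
      have un: "{1..p+t} = {1..p-1} \<union> {p..p+t}" using p0 by auto
      have "Sq (p + t) = (\<Sum>j\<in>{1..p-1}. 1 / fact j) + (\<Sum>j\<in>{p..p+t}. 1 / fact j)"
        unfolding Sq_def un by (rule sum.union_disjoint) auto
      moreover have "(\<Sum>j\<in>{p..p+t}. 1 / fact j) = (\<Sum>i\<le>t. 1 / fact (p + i) :: rat)"
        using sum.shift_bounds_cl_nat_ivl[of "\<lambda>j. 1 / fact j :: rat" 0 p t]
        by (simp add: atLeast0AtMost add.commute)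
      moreover have "(\<Sum>i\<le>t. 1 / fact (p + i) :: rat) = of_int (int e0) / of_int (int (fact (p + t)))"
      proof -
        have "1 / fact (p + i) = (of_nat (\<Prod>{Suc (p + i)..p + t}) / of_nat (fact (p + t)) :: rat)"
          if "i \<le> t" for i
        proof -
          have fe: "fact (p + t) = fact (p + i) * \<Prod>{Suc (p + i)..p + t}"
            using that by (intro fact_eq_fact_times) simp
          have "(of_nat (fact (p + t)) :: rat) = fact (p + i) * of_nat (\<Prod>{Suc (p + i)..p + t})"
            using arg_cong[OF fe, of "of_nat :: nat \<Rightarrow> rat"] by (simp only: of_nat_mult a0)
          moreover have "\<Prod>{Suc (p + i)..p + t} \<noteq> 0" by simp
          ultimately show ?thesis by (simp add: field_simps)
        qed
        then have "(\<Sum>i\<le>t. 1 / fact (p + i) :: rat) = (\<Sum>i\<le>t. of_nat (\<Prod>{Suc (p + i)..p + t}) / of_nat (fact (p + t)))"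
          by (intro sum.cong) auto
        then show ?thesis unfolding e0_def by (simp add: sum_divide_distrib)
      qed
      moreover have "(\<Sum>j\<in>{1..p-1}. 1 / fact j :: rat) = (\<Sum>j\<in>{1..p-1}. of_int 1 / of_int (int (fact j)))"
        by (intro sum.cong refl a2)
      ultimately have eq: "Sq (p + t) = of_int (int e0) / of_int (int (fact (p + t))) + (\<Sum>j\<in>{1..p-1}. of_int 1 / of_int (int (fact j)))"
        by simp
      have ndvd: "\<forall>j\<in>{1..p-1}. \<not> int p dvd int (fact j)"
        using p by (auto simp del: of_nat_fact simp: int_dvd_int_iff prime_dvd_fact_iff)
      have Dd: "int p dvd int (fact (p + t))" using p by (simp del: of_nat_fact add: int_dvd_int_iff prime_dvd_fact_iff)
      have D0: "int (fact (p + t)) \<noteq> 0" by simp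
      have "e0 mod p = a mod p"
      proof -
        have "\<Prod>{Suc (p + i)..p + t} = (\<Prod>m\<in>{Suc i..t}. m + p)" for i
          using prod.shift_bounds_cl_nat_ivl[of "\<lambda>m. m" "Suc i" p t] by (simp add: add.commute)
        then have "e0 mod p = (\<Sum>i\<le>t. (\<Prod>m\<in>{Suc i..t}. m + p) mod p) mod p"
          unfolding e0_def by (simp only: mod_sum_eq)
        also have "\<dots> = (\<Sum>i\<le>t. (\<Prod>m\<in>{Suc i..t}. m) mod p) mod p" by (simp only: prod_shift_mod)
        also have "\<dots> = a mod p" unfolding a_def by (simp only: mod_sum_eq)
        finally show ?thesis .
      qed
      moreover have "a \<ge> 1"
      proof -
        have "(\<Prod>m\<in>{Suc t..t}. m) \<le> a" unfolding a_def by (rule member_le_sum) auto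
        then show ?thesis by simp
      qed
      ultimately have "e0 mod p \<noteq> 0" using p by simp
      then have "\<not> p dvd e0" by (simp add: dvd_eq_mod_eq_0)
      then have An: "\<not> int p dvd int e0" by simp
      from split_den[OF pi _ ndvd D0 Dd An, of "\<lambda>_. 1"]
      show "\<exists>A D. D \<noteq> 0 \<and> int p dvd D \<and> \<not> int p dvd A \<and> Sq (p + t) = of_int A / of_int D"
        unfolding eq by auto
    qed
  qed
  then show ?thesis by (simp add: S_eq)
qed

theorem mainTheorem11:
  shows "transcendental_function_over alg_numbers (\<lambda>n. complex_of_real (F_fun n)) \<and>
         transcendental_function_over alg_numbers (\<lambda>n. complex_of_real (L_fun n)) \<and>
         transcendental_function_over alg_numbers (\<lambda>n. complex_of_real (S_fun n))"
  using F_trans L_trans S_trans by blast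

end
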